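(* Let $G$ be a finite cyclic group and let $f$ be an automorphism of $\mathcal{P}_{0}(G)$ with trivial pullback. Then $f$ is the identity.
   Context: For an additively written finite abelian group $G$, $\mathcal{P}_{0}(G)$ is the monoid of all subsets of $G$ containing $0$, with setwise addition and identity $\{0\}$. An automorphism $f$ of $\mathcal{P}_0(G)$ has trivial pullback if $f(\{0,a\})=\{0,a\}$ for all $a\in G$. *)

theory Defs
  imports Main
begin

definition P0 :: "('a::ab_group_add) set set" where
  "P0 = {A. (0::'a) \<in> A}"

definition setplus :: "('a::ab_group_add) set \<Rightarrow> 'a set \<Rightarrow> 'a set" where
  "setplus A B = {a + b | a b. a \<in> A \<and> b \<in> B}"

definition P0_automorphism :: "(('a::ab_group_add) set \<Rightarrow> 'a set) \<Rightarrow> bool" where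
  "P0_automorphism f \<longleftrightarrow> bij_betw f P0 P0
     \<and> (\<forall>A\<in>P0. \<forall>B\<in>P0. f (setplus A B) = setplus (f A) (f B))
     \<and> f {0} = {0}"

definition trivial_pullback :: "(('a::ab_group_add) set \<Rightarrow> 'a set) \<Rightarrow> bool" where
  "trivial_pullback f \<longleftrightarrow> (\<forall>a. f {0, a} = {0, a})"

definition cyclic_add_group :: "'a::ab_group_add itself \<Rightarrow> bool" where
  "cyclic_add_group _ \<longleftrightarrow> (\<exists>g::'a. \<forall>x::'a. \<exists>n::int. x = (if n \<ge> 0 then ((+) g ^^ nat n) 0 else - (((+) g ^^ nat (-n)) 0)))"

end

theory Submission
  imports Defs
begin

definition mult :: "nat \<Rightarrow> 'a::ab_group_add \<Rightarrow> 'a" where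
  "mult m x = ((+) x ^^ m) 0"

lemma mult_0 [simp]: "mult 0 x = 0" by (simp add: mult_def)
lemma mult_Suc [simp]: "mult (Suc m) x = x + mult m x" by (simp add: mult_def)
lemma mult_1 [simp]: "mult 1 x = x" using mult_Suc[of 0 x] by simp
lemma mult_add: "mult (i + j) x = mult i x + mult j x"
  by (induction i) (simp_all add: algebra_simps)
lemma mult_neg: "mult m (- x) = - mult m x"
  by (induction m) (simp_all add: algebra_simps)

lemma mult_closed:
  assumes "0 \<in> H" "\<And>a b. a \<in> H \<Longrightarrow> b \<in> H \<Longrightarrow> a + b \<in> H" "x \<in> H"
  shows "mult m x \<in> H"
  by (induction m) (simp_all add: assms)

lemma mult_mul_closed:
  assumes "0 \<in> H" "\<And>a b. a \<in> H \<Longrightarrow> b \<in> H \<Longrightarrow> a + b \<in> H" "mult d x \<in> H"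
  shows "mult (q * d) x \<in> H"
proof (induction q)
  case 0 then show ?case using assms by simp
next
  case (Suc q)
  have "mult (Suc q * d) x = mult d x + mult (q * d) x" using mult_add[of d "q*d" x] by simp
  then show ?case using Suc assms by simp
qed

lemma setplus_pair: "setplus A {0, x} = A \<union> {a + x | a. a \<in> A}"
  unfolding setplus_def by (auto, metis add.right_neutral)

lemma setplus_P0: "A \<in> P0 \<Longrightarrow> B \<in> P0 \<Longrightarrow> setplus A B \<in> P0"
  unfolding P0_def setplus_def by force

lemma pair_P0 [simp]: "{0, x} \<in> P0" unfolding P0_def by simp

lemma sub_setplus: "0 \<in> B \<Longrightarrow> A \<subseteq> setplus A B" unfolding setplus_def by force

lemma neg_closed:
  fixes A :: "'a::{finite,ab_group_add} set"
  assumes "\<forall>y\<in>A. y + x \<in> A" "y \<in> A"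
  shows "y - x \<in> A"
proof -
  have "(\<lambda>y. y + x) ` A = A"
    by (rule endo_inj_surj) (use assms in \<open>auto simp: inj_on_def\<close>)
  then obtain z where "z \<in> A" "y = z + x" using assms(2) by (metis imageE)
  then show ?thesis by simp
qed

definition J :: "nat \<Rightarrow> 'a::ab_group_add \<Rightarrow> 'a set" where
  "J k x = {mult j x | j. j \<le> k}"

lemma J_P0: "J k x \<in> P0" unfolding J_def P0_def by force
lemma J_0: "J 0 x = {0}" unfolding J_def by auto
lemma J_Suc: "J (Suc k) x = setplus (J k x) {0, x}"
  unfolding setplus_pair J_def
proof (intro set_eqI iffI)
  fix w assume "w \<in> {mult j x |j. j \<le> Suc k}"
  then obtain j where j: "j \<le> Suc k" "w = mult j x" by blast
  show "w \<in> {mult j x |j. j \<le> k} \<union> {a + x |a. a \<in> {mult j x |j. j \<le> k}}"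
  proof (cases "j = Suc k")
    case True then have "w = mult k x + x" using j by (simp add: add.commute)
    then show ?thesis by blast
  next
    case False then show ?thesis using j by auto
  qed
next
  fix w assume "w \<in> {mult j x |j. j \<le> k} \<union> {a + x |a. a \<in> {mult j x |j. j \<le> k}}"
  then show "w \<in> {mult j x |j. j \<le> Suc k}"
  proof
    assume "w \<in> {mult j x |j. j \<le> k}" then show ?thesis by auto
  next
    assume "w \<in> {a + x |a. a \<in> {mult j x |j. j \<le> k}}"
    then obtain j where "j \<le> k" "w = mult j x + x" by blast
    then have "w = mult (Suc j) x" by (simp add: add.commute)
    moreover have "Suc j \<le> Suc k" using \<open>j \<le> k\<close> by simp
    ultimately show ?thesis by blast
  qed
qed

lemma dtrick_set:
  fixes H :: "'a::ab_group_add set"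
  assumes Hadd: "\<And>x y. x\<in>H \<Longrightarrow> y\<in>H \<Longrightarrow> x+y \<in> H" and Hneg: "\<And>x. x\<in>H \<Longrightarrow> -x \<in> H"
    and nd: "(u - v) + (u - v) \<notin> H"
  shows "setplus {w. w - u \<notin> H \<and> w - v \<notin> H} {0, u - v} = {w. w - u \<notin> H}"
  unfolding setplus_pair
proof (intro set_eqI iffI)
  fix w assume "w \<in> {w. w - u \<notin> H \<and> w - v \<notin> H} \<union> {a + (u - v) |a. a \<in> {w. w - u \<notin> H \<and> w - v \<notin> H}}"
  then show "w \<in> {w. w - u \<notin> H}"
  proof
    assume "w \<in> {a + (u - v) |a. a \<in> {w. w - u \<notin> H \<and> w - v \<notin> H}}"
    then obtain e where e: "e - u \<notin> H" "e - v \<notin> H" "w = e + (u - v)" by blast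
    have "w - u = e - v" using e(3) by (simp add: algebra_simps)
    then show ?thesis using e by simp
  qed simp
next
  fix w assume "w \<in> {w. w - u \<notin> H}"
  then have wu: "w - u \<notin> H" by simp
  show "w \<in> {w. w - u \<notin> H \<and> w - v \<notin> H} \<union> {a + (u - v) |a. a \<in> {w. w - u \<notin> H \<and> w - v \<notin> H}}"
  proof (cases "w - v \<in> H")
    case False then show ?thesis using wu by simp
  next
    case True
    define e where "e = w - (u - v)"
    have ev: "e - v = w - u" unfolding e_def by (simp add: algebra_simps)
    have eu: "e - u \<notin> H"
    proof
      assume "e - u \<in> H"
      then have "(w - v) + - (e - u) \<in> H" using True Hadd Hneg by blast
      moreover have "(w - v) + - (e - u) = (u - v) + (u - v)" unfolding e_def by (simp add: algebra_simps)
      ultimately show False using nd by metis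
    qed
    have "w = e + (u - v)" unfolding e_def by simp
    moreover have "e \<in> {w. w - u \<notin> H \<and> w - v \<notin> H}" using ev eu wu by simp
    ultimately show ?thesis by blast
  qed
qed

locale autP =
  fixes f :: "'a::{finite,ab_group_add} set \<Rightarrow> 'a set" and g :: 'a
  assumes aut: "P0_automorphism f" and triv: "trivial_pullback f"
    and gen: "\<forall>x. \<exists>m. x = mult m g"
begin

lemma bij: "bij_betw f P0 P0" using aut unfolding P0_automorphism_def by blast
lemma hom: "A \<in> P0 \<Longrightarrow> B \<in> P0 \<Longrightarrow> f (setplus A B) = setplus (f A) (f B)"
  using aut unfolding P0_automorphism_def by blast
lemma f0: "f {0} = {0}" using aut unfolding P0_automorphism_def by blast
lemma fpairs: "f {0,x} = {0,x}" using triv unfolding trivial_pullback_def by blast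
lemma fP0: "A \<in> P0 \<Longrightarrow> f A \<in> P0" using bij bij_betwE by blast
lemma finj: "A \<in> P0 \<Longrightarrow> B \<in> P0 \<Longrightarrow> f A = f B \<Longrightarrow> A = B"
  using bij unfolding bij_betw_def inj_on_def by blast
lemma fpair: "A \<in> P0 \<Longrightarrow> f (setplus A {0,x}) = setplus (f A) {0,x}"
  using hom[OF _ pair_P0] fpairs by simp

lemma fUNIV: "f UNIV = UNIV"
proof -
  have U: "UNIV \<in> P0" unfolding P0_def by simp
  obtain B where B: "B \<in> P0" "f B = UNIV" using bij U unfolding bij_betw_def by (metis imageE)
  have e1: "setplus UNIV B = UNIV" using B(1) unfolding setplus_def P0_def by force
  have e2: "setplus (f UNIV) UNIV = UNIV" using fP0[OF U] unfolding setplus_def P0_def by force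
  have "f UNIV = f (setplus UNIV B)" using e1 by simp
  also have "\<dots> = setplus (f UNIV) (f B)" using hom U B(1) by blast
  also have "\<dots> = UNIV" using B(2) e2 by simp
  finally show ?thesis .
qed

lemma stab_iff: "A \<in> P0 \<Longrightarrow> setplus (f A) {0,x} = f A \<longleftrightarrow> setplus A {0,x} = A"
proof
  assume A: "A \<in> P0" and "setplus (f A) {0,x} = f A"
  then have "f (setplus A {0,x}) = f A" using fpair by simp
  then show "setplus A {0,x} = A" using finj A setplus_P0 pair_P0 by blast
next
  assume A: "A \<in> P0" and "setplus A {0,x} = A"
  then show "setplus (f A) {0,x} = f A" using fpair by metis
qed

lemma idem_stab:
  assumes X: "X \<in> P0" "setplus X X = X"
  shows "setplus X {0,x} = X \<longleftrightarrow> x \<in> X"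
proof
  assume "setplus X {0,x} = X"
  moreover have "0 + x \<in> setplus X {0,x}" using X(1) unfolding setplus_pair P0_def by blast
  ultimately show "x \<in> X" by simp
next
  assume x: "x \<in> X"
  have "{a + x | a. a \<in> X} \<subseteq> setplus X X" using x unfolding setplus_def by blast
  then show "setplus X {0,x} = X" using X(2) unfolding setplus_pair by blast
qed

lemma fixed_idem:
  assumes H: "H \<in> P0" "setplus H H = H"
  shows "f H = H"
proof -
  have fH: "f H \<in> P0" using fP0 H(1) by blast
  have fHH: "setplus (f H) (f H) = f H" using hom[OF H(1) H(1)] H(2) by simp
  show "f H = H"
  proof (rule set_eqI)
    fix x
    have "x \<in> f H \<longleftrightarrow> setplus (f H) {0,x} = f H" using idem_stab[OF fH fHH] by simp
    also have "\<dots> \<longleftrightarrow> setplus H {0,x} = H" using stab_iff H(1) by simp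
    also have "\<dots> \<longleftrightarrow> x \<in> H" by (rule idem_stab[OF H])
    finally show "x \<in> f H \<longleftrightarrow> x \<in> H" .
  qed
qed

lemma fJ: "f (J k x) = J k x"
  by (induction k) (simp_all add: J_0 f0 J_Suc fpair J_P0)

lemma fixed_sum: "A \<in> P0 \<Longrightarrow> B \<in> P0 \<Longrightarrow> f A = A \<Longrightarrow> f B = B \<Longrightarrow> f (setplus A B) = setplus A B"
  using hom by simp


lemma dtrick:
  assumes H0: "0 \<in> H" and Hadd: "\<And>x y. x\<in>H \<Longrightarrow> y\<in>H \<Longrightarrow> x+y \<in> H"
    and Hneg: "\<And>x. x\<in>H \<Longrightarrow> -x \<in> H"
    and cH: "c \<notin> H" and bH: "b \<notin> H" and nd: "(c - b) + (c - b) \<notin> H"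
    and fF: "f {w. w - b \<notin> H} = {w. w - b \<notin> H}"
  shows "c \<notin> f {w. w - c \<notin> H}"
proof
  assume cA: "c \<in> f {w. w - c \<notin> H}"
  define D where "D = {w. w - c \<notin> H \<and> w - b \<notin> H}"
  have nc: "- c \<notin> H" using Hneg[of "-c"] cH by auto
  have nb: "- b \<notin> H" using Hneg[of "-b"] bH by auto
  have DP0: "D \<in> P0" unfolding D_def P0_def using nc nb by simp
  have eqA: "setplus D {0, c - b} = {w. w - c \<notin> H}" unfolding D_def by (rule dtrick_set[OF Hadd Hneg nd])
  have nd': "(b - c) + (b - c) \<notin> H"
  proof
    assume "(b - c) + (b - c) \<in> H"
    then have "- ((b - c) + (b - c)) \<in> H" by (rule Hneg)
    moreover have "- ((b - c) + (b - c)) = (c - b) + (c - b)" by (simp add: algebra_simps)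
    ultimately show False using nd by metis
  qed
  have D2: "D = {w. w - b \<notin> H \<and> w - c \<notin> H}" unfolding D_def by blast
  have eqF: "setplus D {0, b - c} = {w. w - b \<notin> H}" unfolding D2 by (rule dtrick_set[OF Hadd Hneg nd'])
  have fD: "setplus (f D) {0, b - c} = {w. w - b \<notin> H}" using fpair[OF DP0, of "b - c"] eqF fF by simp
  have fA: "f {w. w - c \<notin> H} = setplus (f D) {0, c - b}" using fpair[OF DP0, of "c - b"] eqA by simp
  from cA fA have "c \<in> f D \<union> {a + (c - b) | a. a \<in> f D}" by (simp add: setplus_pair)
  then show False
  proof
    assume "c \<in> f D"
    then have "c + (b - c) \<in> setplus (f D) {0, b - c}" unfolding setplus_pair by blast
    then have "b \<in> {w. w - b \<notin> H}" using fD by simp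
    then show False using H0 by simp
  next
    assume "c \<in> {a + (c - b) | a. a \<in> f D}"
    then obtain a where a: "a \<in> f D" "c = a + (c - b)" by blast
    then have "a = b" by (metis add_diff_cancel_left' add_diff_eq diff_add_cancel eq_diff_eq)
    then have "b \<in> setplus (f D) {0, b - c}" using a(1) sub_setplus[of "{0, b - c}" "f D"] by blast
    then show False using fD H0 by simp
  qed
qed

lemma exceptional:
  assumes AP0: "A \<in> P0" and cA: "c \<notin> A" and exc: "\<forall>c'. c' \<notin> A \<longrightarrow> setplus A {0, c - c'} = A"
  shows "c \<notin> f A"
proof -
  define H where "H = {x. \<forall>y\<in>A. y + x \<in> A}"
  have H0: "0 \<in> H" unfolding H_def by simp
  have Hadd: "\<And>x y. x \<in> H \<Longrightarrow> y \<in> H \<Longrightarrow> x + y \<in> H"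
  proof -
    fix x y assume xy: "x \<in> H" "y \<in> H"
    show "x + y \<in> H" unfolding H_def
    proof (intro CollectI ballI)
      fix z assume "z \<in> A"
      then have "z + x \<in> A" using xy(1) unfolding H_def by blast
      then have "(z + x) + y \<in> A" using xy(2) unfolding H_def by blast
      then show "z + (x + y) \<in> A" by (simp add: add.assoc)
    qed
  qed
  have Hneg: "\<And>x. x \<in> H \<Longrightarrow> -x \<in> H"
  proof -
    fix x assume "x \<in> H"
    then have "\<forall>y\<in>A. y + x \<in> A" unfolding H_def by simp
    then have "\<forall>y\<in>A. y - x \<in> A" using neg_closed[of A x] by simp
    then show "-x \<in> H" unfolding H_def by simp
  qed
  have Hneg_iff: "\<And>x. -x \<in> H \<longleftrightarrow> x \<in> H"
  proof
    fix x assume "-x \<in> H" then have "-(-x) \<in> H" by (rule Hneg)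
    then show "x \<in> H" by simp
  qed (rule Hneg)
  have Hdiff: "\<And>x y. x\<in>H \<Longrightarrow> y\<in>H \<Longrightarrow> x - y \<in> H"
  proof -
    fix x y assume "x \<in> H" "y \<in> H"
    then have "x + -y \<in> H" using Hadd[of x "-y"] Hneg[of y] by blast
    then show "x - y \<in> H" by simp
  qed
  have stab: "\<And>x. setplus A {0,x} = A \<longleftrightarrow> x \<in> H" unfolding setplus_pair H_def by blast
  have memA: "\<And>w. w \<in> A \<longleftrightarrow> w - c \<notin> H"
  proof
    fix w assume w: "w \<in> A"
    show "w - c \<notin> H"
    proof
      assume "w - c \<in> H"
      then have "-(w - c) \<in> H" by (rule Hneg)
      then have "w + -(w - c) \<in> A" using w unfolding H_def by blast
      then show False using cA by simp
    qed
  next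
    fix w assume wc: "w - c \<notin> H"
    show "w \<in> A"
    proof (rule ccontr)
      assume "w \<notin> A"
      then have "c - w \<in> H" using exc stab by blast
      then have "-(c - w) \<in> H" by (rule Hneg)
      then show False using wc by simp
    qed
  qed
  have Aeq: "A = {w. w - c \<notin> H}" using memA by blast
  have cH: "c \<notin> H"
  proof
    assume "c \<in> H"
    then have "0 - c \<in> H" using Hneg by simp
    moreover have "0 \<in> A" using AP0 unfolding P0_def by simp
    ultimately show False using memA by blast
  qed
  have HP0: "H \<in> P0" using H0 unfolding P0_def by simp
  have HH: "setplus H H = H" unfolding setplus_def using Hadd H0 by force
  have fH: "f H = H" using fixed_idem HP0 HH by simp
  define S where "S k = setplus H (J k g)" for k
  define S' where "S' k = setplus H (J k (-g))" for k
  have fS: "\<And>k. f (S k) = S k" unfolding S_def using fixed_sum[OF HP0 J_P0 fH fJ] by simp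
  have fS': "\<And>k. f (S' k) = S' k" unfolding S'_def using fixed_sum[OF HP0 J_P0 fH fJ] by simp
  have memS: "\<And>w k. w \<in> S k \<longleftrightarrow> (\<exists>j\<le>k. w - mult j g \<in> H)"
  proof -
    fix w k
    show "w \<in> S k \<longleftrightarrow> (\<exists>j\<le>k. w - mult j g \<in> H)"
    proof
      assume "w \<in> S k"
      then obtain a j where "a \<in> H" "j \<le> k" "w = a + mult j g" unfolding S_def setplus_def J_def by blast
      then show "\<exists>j\<le>k. w - mult j g \<in> H" by auto
    next
      assume "\<exists>j\<le>k. w - mult j g \<in> H"
      then obtain j where j: "j \<le> k" "w - mult j g \<in> H" by blast
      have "w = (w - mult j g) + mult j g" by simp
      then show "w \<in> S k" unfolding S_def setplus_def J_def using j by blast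
    qed
  qed
  have memS': "\<And>w k. w \<in> S' k \<longleftrightarrow> (\<exists>j\<le>k. w + mult j g \<in> H)"
  proof -
    fix w k
    show "w \<in> S' k \<longleftrightarrow> (\<exists>j\<le>k. w + mult j g \<in> H)"
    proof
      assume "w \<in> S' k"
      then obtain a j where "a \<in> H" "j \<le> k" "w = a + mult j (-g)" unfolding S'_def setplus_def J_def by blast
      then show "\<exists>j\<le>k. w + mult j g \<in> H" by (auto simp: mult_neg)
    next
      assume "\<exists>j\<le>k. w + mult j g \<in> H"
      then obtain j where j: "j \<le> k" "w + mult j g \<in> H" by blast
      have "w = (w + mult j g) + mult j (-g)" by (simp add: mult_neg)
      then show "w \<in> S' k" unfolding S'_def setplus_def J_def using j by blast
    qed
  qed
  have gH: "g \<notin> H"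
  proof
    assume "g \<in> H"
    then have "\<And>m. mult m g \<in> H" using mult_closed H0 Hadd by blast
    then have "c \<in> H" using gen by metis
    with cH show False by simp
  qed
  obtain M where M: "\<And>x. \<exists>m\<le>M. x = mult m g"
  proof -
    define mm where "mm x = (SOME m. x = mult m g)" for x
    have mm: "\<And>x. x = mult (mm x) g"
    proof -
      fix x
      from gen have "\<exists>m. x = mult m g" by blast
      then show "x = mult (mm x) g" unfolding mm_def by (rule someI_ex)
    qed
    have le: "\<And>x. mm x \<le> Max (range mm)" by (rule Max_ge) auto
    show ?thesis
    proof (rule that)
      fix x
      show "\<exists>m\<le>Max (range mm). x = mult m g" using mm[of x] le[of x] by blast
    qed
  qed
  have SM: "S M = UNIV"
  proof (rule set_eqI)
    fix w
    obtain m where "m \<le> M" "w = mult m g" using M by blast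
    then have "\<exists>j\<le>M. w - mult j g \<in> H" using H0 by auto
    then show "w \<in> S M \<longleftrightarrow> w \<in> UNIV" using memS by blast
  qed
  have mono: "\<And>a b. a \<le> b \<Longrightarrow> S a = UNIV \<Longrightarrow> S b = UNIV"
  proof -
    fix a b :: nat assume ab: "a \<le> b" "S a = UNIV"
    show "S b = UNIV"
    proof (rule set_eqI)
      fix w
      have "w \<in> S a" using ab by simp
      then obtain j where "j \<le> a" "w - mult j g \<in> H" using memS by blast
      then have "\<exists>j\<le>b. w - mult j g \<in> H" using ab(1) le_trans by blast
      then show "w \<in> S b \<longleftrightarrow> w \<in> UNIV" using memS by blast
    qed
  qed
  have S0: "S 0 \<noteq> UNIV"
  proof
    assume "S 0 = UNIV"
    then have "c \<in> S 0" by simp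
    then show False using memS cH by auto
  qed
  have red: "\<And>r. mult r g \<in> H \<Longrightarrow> 1 \<le> r \<Longrightarrow> S (r - 1) = UNIV"
  proof -
    fix r assume r: "mult r g \<in> H" "1 \<le> r"
    show "S (r - 1) = UNIV"
    proof (rule set_eqI)
      fix w
      obtain m where m: "w = mult m g" using gen by blast
      have q: "mult ((m div r) * r) g \<in> H" using mult_mul_closed[OF H0 Hadd r(1)] by blast
      have "w = mult ((m div r) * r) g + mult (m mod r) g" using m mult_add by (metis div_mult_mod_eq)
      then have "w - mult (m mod r) g \<in> H" using q by simp
      moreover have "m mod r \<le> r - 1" using mod_less_divisor[of r m] r(2) by linarith
      ultimately show "w \<in> S (r - 1) \<longleftrightarrow> w \<in> UNIV" using memS by blast
    qed
  qed
  define m0 where "m0 = (LEAST m. S m = UNIV)"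
  have Sm0: "S m0 = UNIV" unfolding m0_def using SM by (rule LeastI)
  have notS: "\<And>m. m < m0 \<Longrightarrow> S m \<noteq> UNIV" unfolding m0_def using not_less_Least by blast
  have m0pos: "m0 \<noteq> 0" using Sm0 S0 by auto
  define k where "k = m0 - 1"
  have Sk: "S k \<noteq> UNIV" using notS m0pos k_def by simp
  have Sk1: "S (Suc k) = UNIV" using Sm0 m0pos k_def by simp
  have ii: "\<And>r. mult r g \<in> H \<Longrightarrow> 1 \<le> r \<Longrightarrow> k + 2 \<le> r"
  proof (rule ccontr)
    fix r assume r: "mult r g \<in> H" "1 \<le> r" "\<not> k + 2 \<le> r"
    then have "r - 1 \<le> k" by simp
    then have "S k = UNIV" using mono red[OF r(1) r(2)] by blast
    then show False using Sk by simp
  qed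
  have iv: "\<And>w. \<exists>t\<le>Suc k. w - mult t g \<in> H" using Sk1 memS by blast
  have i: "mult (k+2) g \<in> H"
  proof -
    obtain t where t: "t \<le> Suc k" "-g - mult t g \<in> H" using iv by blast
    then have "-(-g - mult t g) \<in> H" using Hneg by blast
    moreover have "-(-g - mult t g) = mult (Suc t) g" by (simp add: algebra_simps)
    ultimately have st: "mult (Suc t) g \<in> H" by metis
    then have "k + 2 \<le> Suc t" using ii[OF st] by simp
    then have "Suc t = k + 2" using t(1) by simp
    then show ?thesis using st by metis
  qed
  have sub: "\<And>a b. mult a g \<in> H \<Longrightarrow> mult b g \<in> H \<Longrightarrow> b \<le> a \<Longrightarrow> mult (a - b) g \<in> H"
  proof -
    fix a b assume ab: "mult a g \<in> H" "mult b g \<in> H" "b \<le> a"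
    have "mult a g = mult b g + mult (a - b) g" using mult_add[of b "a-b" g] ab(3) by simp
    then have "mult (a - b) g = mult a g - mult b g" by (simp add: algebra_simps)
    then show "mult (a - b) g \<in> H" using Hdiff ab by simp
  qed
  have F1: "S k = {w. w - (-g) \<notin> H}"
  proof (rule set_eqI)
    fix w
    show "w \<in> S k \<longleftrightarrow> w \<in> {w. w - (-g) \<notin> H}"
    proof
      assume "w \<in> S k"
      then obtain j where j: "j \<le> k" "w - mult j g \<in> H" using memS by blast
      have "w + g \<notin> H"
      proof
        assume "w + g \<in> H"
        then have "(w + g) - (w - mult j g) \<in> H" using j Hdiff by blast
        moreover have "(w + g) - (w - mult j g) = mult (Suc j) g" by (simp add: algebra_simps)
        ultimately have sj: "mult (Suc j) g \<in> H" by metis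
        have "k + 2 \<le> Suc j" using ii[OF sj] by simp
        then show False using j(1) by simp
      qed
      then show "w \<in> {w. w - (-g) \<notin> H}" by simp
    next
      assume "w \<in> {w. w - (-g) \<notin> H}"
      then have wg: "w + g \<notin> H" by simp
      obtain t where t: "t \<le> Suc k" "w - mult t g \<in> H" using iv by blast
      have "t \<noteq> Suc k"
      proof
        assume tk: "t = Suc k"
        have "(w - mult t g) + mult (k+2) g \<in> H" using t(2) i Hadd by blast
        moreover have "(w - mult t g) + mult (k+2) g = w + g" using tk by (simp add: add_2_eq_Suc' algebra_simps)
        ultimately show False using wg by metis
      qed
      then have "t \<le> k" using t(1) by simp
      then show "w \<in> S k" using memS t(2) by blast
    qed
  qed
  have F2: "S' k = {w. w - g \<notin> H}"
  proof (rule set_eqI)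
    fix w
    have "w \<in> S' k \<longleftrightarrow> (\<exists>j\<le>k. w + mult j g \<in> H)" by (rule memS')
    also have "\<dots> \<longleftrightarrow> (\<exists>j\<le>k. -w - mult j g \<in> H)"
    proof -
      have "\<And>j. -w - mult j g = - (w + mult j g)" by (simp add: algebra_simps)
      then show ?thesis using Hneg_iff by metis
    qed
    also have "\<dots> \<longleftrightarrow> -w \<in> S k" using memS by simp
    also have "\<dots> \<longleftrightarrow> -w - (-g) \<notin> H" using F1 by blast
    also have "\<dots> \<longleftrightarrow> w - g \<notin> H"
    proof -
      have "-w - (-g) = - (w - g)" by (simp add: algebra_simps)
      then show ?thesis using Hneg_iff by metis
    qed
    finally show "w \<in> S' k \<longleftrightarrow> w \<in> {w. w - g \<notin> H}" by simp
  qed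
  have fF1: "f {w. w - (-g) \<notin> H} = {w. w - (-g) \<notin> H}" using fS F1 by metis
  have fF2: "f {w. w - g \<notin> H} = {w. w - g \<notin> H}" using fS' F2 by metis
  have ngH: "-g \<notin> H" using gH Hneg_iff by simp
  obtain t where t: "t \<le> Suc k" "c - mult t g \<in> H" using iv by blast
  have t0: "t \<noteq> 0"
  proof
    assume "t = 0" then show False using t(2) cH by simp
  qed
  show "c \<notin> f A"
  proof (cases "t = Suc k")
    case True
    have cg: "c + g \<in> H"
    proof -
      have "(c - mult t g) + mult (k+2) g \<in> H" using t(2) i Hadd by blast
      moreover have "(c - mult t g) + mult (k+2) g = c + g" using True by (simp add: add_2_eq_Suc' algebra_simps)
      ultimately show ?thesis by metis
    qed
    have "A = {w. w - (-g) \<notin> H}"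
    proof (rule set_eqI)
      fix w
      have e1: "w - (-g) = (w - c) + (c + g)" by (simp add: algebra_simps)
      have e2: "w - c = (w - (-g)) - (c + g)" by (simp add: algebra_simps)
      have "w - c \<in> H \<longleftrightarrow> w - (-g) \<in> H"
      proof
        assume "w - c \<in> H" then show "w - (-g) \<in> H" unfolding e1 using Hadd[OF _ cg] by blast
      next
        assume "w - (-g) \<in> H" then show "w - c \<in> H" unfolding e2 using Hdiff[OF _ cg] by blast
      qed
      then show "w \<in> A \<longleftrightarrow> w \<in> {w. w - (-g) \<notin> H}" using memA by simp
    qed
    then show ?thesis using fF1 cA by simp
  next
    case tk: False
    show ?thesis
    proof (cases "t = 1")
      case True
      have cg: "c - g \<in> H" using t(2) True by simp
      have "A = {w. w - g \<notin> H}"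
      proof (rule set_eqI)
        fix w
        have e1: "w - g = (w - c) + (c - g)" by (simp add: algebra_simps)
        have e2: "w - c = (w - g) - (c - g)" by (simp add: algebra_simps)
        have "w - c \<in> H \<longleftrightarrow> w - g \<in> H"
        proof
          assume "w - c \<in> H" then show "w - g \<in> H" unfolding e1 using Hadd[OF _ cg] by blast
        next
          assume "w - g \<in> H" then show "w - c \<in> H" unfolding e2 using Hdiff[OF _ cg] by blast
        qed
        then show "w \<in> A \<longleftrightarrow> w \<in> {w. w - g \<notin> H}" using memA by simp
      qed
      then show ?thesis using fF2 cA by simp
    next
      case t1: False
      obtain s where ts0: "t = Suc s" using t0 not0_implies_Suc by blast
      have ts: "t = Suc s" "1 \<le> s" using ts0 t1 by auto
      have sk: "s + 1 \<le> k" using ts t(1) tk by simp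
      have mt: "mult t g = g + mult s g" using ts by simp
      show ?thesis
      proof (cases "(c + g) + (c + g) \<in> H")
        case False
        have "c \<notin> f {w. w - c \<notin> H}"
          by (rule dtrick[OF H0 Hadd Hneg cH ngH]) (use False fF1 in simp_all)
        then show ?thesis using Aeq by simp
      next
        case cgg: True
        show ?thesis
        proof (cases "(c - g) + (c - g) \<in> H")
          case False
          have "c \<notin> f {w. w - c \<notin> H}"
            by (rule dtrick[OF H0 Hadd Hneg cH gH]) (use False fF2 in simp_all)
          then show ?thesis using Aeq by simp
        next
          case cgg2: True
          have ctt: "(c - mult t g) + (c - mult t g) \<in> H" using t(2) Hadd by blast
          have e1: "mult (Suc t + Suc t) g \<in> H"
          proof -
            have "(c + g) + (c + g) - ((c - mult t g) + (c - mult t g)) \<in> H" using cgg ctt Hdiff by blast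
            moreover have "(c + g) + (c + g) - ((c - mult t g) + (c - mult t g)) = mult (Suc t + Suc t) g"
              by (simp add: mult_add algebra_simps)
            ultimately show ?thesis by metis
          qed
          have e2: "mult (s + s) g \<in> H"
          proof -
            have "(c - g) + (c - g) - ((c - mult t g) + (c - mult t g)) \<in> H" using cgg2 ctt Hdiff by blast
            moreover have "(c - g) + (c - g) - ((c - mult t g) + (c - mult t g)) = mult (s + s) g"
              using mt by (simp add: mult_add algebra_simps)
            ultimately show ?thesis by metis
          qed
          have a1: "k + 2 \<le> s + s" using ii[OF e2] ts(2) by simp
          have a2: "\<not> k + 2 < s + s"
          proof
            assume lt: "k + 2 < s + s"
            have m1: "mult (s + s - (k+2)) g \<in> H" using sub[OF e2 i] lt by simp
            have "k + 2 \<le> s + s - (k+2)" using ii[OF m1] lt by simp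
            then show False using sk by simp
          qed
          have m2: "mult (Suc t + Suc t - (k+2)) g \<in> H" using sub[OF e1 i] a1 ts by simp
          have "k + 2 \<le> Suc t + Suc t - (k+2)" using ii[OF m2] a1 ts by simp
          then show ?thesis using a1 a2 ts sk by simp
        qed
      qed
    qed
  qed
qed

lemma main: "A \<in> P0 \<Longrightarrow> f A = A"
proof (induction "card (UNIV :: 'a set) - card A" arbitrary: A rule: less_induct)
  case less
  note AP0 = less.prems
  have IH: "\<And>B. B \<in> P0 \<Longrightarrow> card A < card B \<Longrightarrow> f B = B"
  proof -
    fix B :: "'a set" assume B: "B \<in> P0" "card A < card B"
    have "card B \<le> card (UNIV :: 'a set)" by (rule card_mono) auto
    then have "card (UNIV :: 'a set) - card B < card (UNIV :: 'a set) - card A" using B(2) by linarith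
    then show "f B = B" using less.hyps B(1) by blast
  qed
  have big: "\<And>x. setplus A {0,x} \<noteq> A \<Longrightarrow> f (setplus A {0,x}) = setplus A {0,x}"
  proof -
    fix x assume ne: "setplus A {0,x} \<noteq> A"
    have "A \<subset> setplus A {0,x}" using sub_setplus[of "{0,x}" A] ne by auto
    then have "card A < card (setplus A {0,x})" by (intro psubset_card_mono) auto
    then show "f (setplus A {0,x}) = setplus A {0,x}" using IH setplus_P0[OF AP0 pair_P0] by blast
  qed
  have subA: "f A \<subseteq> A"
  proof
    fix c assume cf: "c \<in> f A"
    show "c \<in> A"
    proof (rule ccontr)
      assume cA: "c \<notin> A"
      show False
      proof (cases "\<exists>c'. c' \<notin> A \<and> setplus A {0, c - c'} \<noteq> A")
        case True
        then obtain c' where c': "c' \<notin> A" "setplus A {0, c - c'} \<noteq> A" by blast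
        have "f A \<subseteq> setplus (f A) {0, c - c'}" by (rule sub_setplus) simp
        also have "\<dots> = f (setplus A {0, c - c'})" using fpair AP0 by simp
        also have "\<dots> = setplus A {0, c - c'}" using big c' by simp
        finally have "c \<in> A \<union> {a + (c - c') | a. a \<in> A}" using cf by (auto simp: setplus_pair)
        then obtain a where "a \<in> A" "c = a + (c - c')" using cA by blast
        then have "a = c'" by (metis add_diff_cancel_left' add_diff_eq diff_add_cancel eq_diff_eq)
        then show False using \<open>a \<in> A\<close> c'(1) by simp
      next
        case False
        then have "\<forall>c'. c' \<notin> A \<longrightarrow> setplus A {0, c - c'} = A" by blast
        then have "c \<notin> f A" using exceptional AP0 cA by blast
        then show False using cf by simp
      qed
    qed
  qed
  show "f A = A"
  proof (cases "A = UNIV")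
    case True then show ?thesis using fUNIV by simp
  next
    case False
    then obtain c' where c': "c' \<notin> A" by blast
    have "A \<subseteq> f A"
    proof
      fix a assume a: "a \<in> A"
      show "a \<in> f A"
      proof (rule ccontr)
        assume naf: "a \<notin> f A"
        define x where "x = a - c'"
        show False
        proof (cases "setplus A {0,x} = A")
          case True
          then have "\<forall>y\<in>A. y + x \<in> A" unfolding setplus_pair by blast
          then have "a - x \<in> A" using neg_closed a by blast
          then show False using c' x_def by simp
        next
          case False
          have "a \<in> setplus A {0,x}" using a sub_setplus[of "{0,x}" A] by blast
          also have "setplus A {0,x} = f (setplus A {0,x})" using big False by simp
          also have "\<dots> = setplus (f A) {0,x}" using fpair AP0 by simp
          finally have "a \<in> f A \<union> {b + x | b. b \<in> f A}" by (simp add: setplus_pair)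
          then obtain b where "b \<in> f A" "a = b + x" using naf by blast
          then have "b = c'" using x_def by (simp add: algebra_simps)
          then show False using \<open>b \<in> f A\<close> subA c' by blast
        qed
      qed
    qed
    then show ?thesis using subA by blast
  qed
qed

end

theorem corollary3p4:
  fixes f :: "('a::{finite, ab_group_add}) set \<Rightarrow> 'a set"
  assumes "cyclic_add_group TYPE('a)"
    and "P0_automorphism f"
    and "trivial_pullback f"
  shows "\<forall>A\<in>P0. f A = A"
proof -
  obtain g :: 'a where g: "\<forall>x::'a. \<exists>n::int. x = (if n \<ge> 0 then ((+) g ^^ nat n) 0 else - (((+) g ^^ nat (-n)) 0))"
    using assms(1) unfolding cyclic_add_group_def by blast
  have "\<not> inj (\<lambda>m::nat. mult m g)"
  proof
    assume "inj (\<lambda>m::nat. mult m g)"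
    then have "finite (UNIV :: nat set)" using finite_imageD[of "\<lambda>m. mult m g" UNIV] by simp
    then show False by simp
  qed
  then obtain i j where ij: "i \<noteq> j" "mult i g = mult j g" unfolding inj_def by blast
  obtain N where N: "N > 0" "mult N g = 0"
  proof (cases "i < j")
    case True
    have "mult j g = mult i g + mult (j - i) g" using mult_add[of i "j - i" g] True by simp
    then have "mult (j - i) g = 0" using ij by simp
    then show ?thesis using that[of "j - i"] True by simp
  next
    case False
    then have "j < i" using ij by simp
    have "mult i g = mult j g + mult (i - j) g" using mult_add[of j "i - j" g] \<open>j < i\<close> by simp
    then have "mult (i - j) g = 0" using ij by simp
    then show ?thesis using that[of "i - j"] \<open>j < i\<close> by simp
  qed
  have multN: "\<And>q. mult (q * N) g = 0"
    using mult_mul_closed[of "{0}" N g] N(2) by simp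
  have gen: "\<forall>x. \<exists>m. x = mult m g"
  proof
    fix x
    obtain n :: int where n: "x = (if n \<ge> 0 then ((+) g ^^ nat n) 0 else - (((+) g ^^ nat (-n)) 0))"
      using g by blast
    show "\<exists>m. x = mult m g"
    proof (cases "n \<ge> 0")
      case True then show ?thesis using n by (auto simp: mult_def)
    next
      case False
      define p where "p = nat (-n)"
      have x: "x = - mult p g" using n False p_def by (simp add: mult_def)
      have "p * N = p + p * (N - 1)" using N(1) by (cases N) auto
      then have "0 = mult p g + mult (p * (N - 1)) g" using multN mult_add by metis
      then have "- mult p g = mult (p * (N - 1)) g" by (metis add_eq_0_iff)
      then show ?thesis using x by blast
    qed
  qed
  interpret autP f g using assms(2,3) gen by unfold_locales
  show ?thesis using main by blast
qed

end
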